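(* Let $R$ be an integral domain and let $Q$ be a semi-latin quandle. If $Q$ is right orderable or left orderable, then the quandle ring $R[Q]$ has no zero-divisors.
   Context: A quandle is a non-empty set $Q$ with a binary operation $(x,y)\mapsto xy$ such that $xx=x$ for all $x$; for all $x,y$ there is a unique $z$ with $x=zy$; and $(xy)z=(xz)(yz)$ for all $x,y,z$. $Q$ is semi-latin if for each $x\in Q$ the map $y\mapsto xy$ is injective. $Q$ is right orderable if there is a linear order $<$ on $Q$ such that $x<y$ implies $xz<yz$ for all $x,y,z$; left orderable if there is a linear order $<$ such that $x<y$ implies $zx<zy$ for all $x,y,z$. The quandle ring $R[Q]$ is the free $R$-module with basis $Q$, with multiplication $\big(\sum_i\alpha_i x_i\big)\big(\sum_j\beta_j x_j\big)=\sum_{i,j}\alpha_i\beta_j (x_ix_j)$. A zero-divisor is a non-zero element $u$ for which there exists a non-zero $v$ with $uv=0$ or $vu=0$. *)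

theory Defs
  imports Main "HOL-Library.Poly_Mapping"
begin

definition quandle :: "('q \<Rightarrow> 'q \<Rightarrow> 'q) \<Rightarrow> bool" where
  "quandle op \<longleftrightarrow>
     (\<forall>x. op x x = x) \<and>
     (\<forall>x y. \<exists>!z. x = op z y) \<and>
     (\<forall>x y z. op (op x y) z = op (op x z) (op y z))"

definition semi_latin :: "('q \<Rightarrow> 'q \<Rightarrow> 'q) \<Rightarrow> bool" where
  "semi_latin op \<longleftrightarrow> (\<forall>x. inj (\<lambda>y. op x y))"

definition strict_linear_order :: "('q \<Rightarrow> 'q \<Rightarrow> bool) \<Rightarrow> bool" where
  "strict_linear_order lt \<longleftrightarrow>
     (\<forall>x. \<not> lt x x) \<and>
     (\<forall>x y z. lt x y \<longrightarrow> lt y z \<longrightarrow> lt x z) \<and>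
     (\<forall>x y. x \<noteq> y \<longrightarrow> lt x y \<or> lt y x)"

definition right_orderable :: "('q \<Rightarrow> 'q \<Rightarrow> 'q) \<Rightarrow> bool" where
  "right_orderable op \<longleftrightarrow> (\<exists>lt. strict_linear_order lt \<and>
     (\<forall>x y z. lt x y \<longrightarrow> lt (op x z) (op y z)))"

definition left_orderable :: "('q \<Rightarrow> 'q \<Rightarrow> 'q) \<Rightarrow> bool" where
  "left_orderable op \<longleftrightarrow> (\<exists>lt. strict_linear_order lt \<and>
     (\<forall>x y z. lt x y \<longrightarrow> lt (op z x) (op z y)))"

text \<open>Quandle ring R[Q]: elements are finitely supported functions Q =>0 R
  (the free R-module with basis Q); product extended bilinearly from op.\<close>
definition qring_mult :: "('q \<Rightarrow> 'q \<Rightarrow> 'q) \<Rightarrow> ('q \<Rightarrow>\<^sub>0 'r::comm_ring_1) \<Rightarrow> ('q \<Rightarrow>\<^sub>0 'r) \<Rightarrow> ('q \<Rightarrow>\<^sub>0 'r)" where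
  "qring_mult op u v =
     (\<Sum>x\<in>Poly_Mapping.keys u. \<Sum>y\<in>Poly_Mapping.keys v. Poly_Mapping.single (op x y) (Poly_Mapping.lookup u x * Poly_Mapping.lookup v y))"

definition qring_zero_divisor :: "('q \<Rightarrow> 'q \<Rightarrow> 'q) \<Rightarrow> ('q \<Rightarrow>\<^sub>0 'r::comm_ring_1) \<Rightarrow> bool" where
  "qring_zero_divisor op u \<longleftrightarrow> u \<noteq> 0 \<and>
     (\<exists>v. v \<noteq> 0 \<and> (qring_mult op u v = 0 \<or> qring_mult op v u = 0))"

end

theory Submission
  imports Defs
begin

lemma slo_max:
  assumes slo: "strict_linear_order lt" and fin: "finite S" and ne: "S \<noteq> {}"
  shows "\<exists>m\<in>S. \<forall>s\<in>S. s \<noteq> m \<longrightarrow> lt s m"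
  using fin ne
proof (induction S rule: finite_ne_induct)
  case (singleton x) then show ?case by auto
next
  case (insert x F)
  then obtain m where m: "m \<in> F" "\<forall>s\<in>F. s \<noteq> m \<longrightarrow> lt s m" by auto
  have irr: "\<And>x. \<not> lt x x" and tr: "\<And>x y z. lt x y \<Longrightarrow> lt y z \<Longrightarrow> lt x z"
    and tot: "\<And>x y. x \<noteq> y \<Longrightarrow> lt x y \<or> lt y x"
    using slo unfolding strict_linear_order_def by blast+
  show ?case
  proof (cases "lt m x")
    case True
    have "\<forall>s\<in>insert x F. s \<noteq> x \<longrightarrow> lt s x"
    proof (intro ballI impI)
      fix s assume "s \<in> insert x F" "s \<noteq> x"
      then have "s \<in> F" by simp
      show "lt s x"
      proof (cases "s = m")
        case True then show ?thesis using \<open>lt m x\<close> by simp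
      next
        case False then have "lt s m" using m \<open>s \<in> F\<close> by simp
        then show ?thesis using tr \<open>lt m x\<close> by blast
      qed
    qed
    then show ?thesis by blast
  next
    case False
    have "x \<noteq> m" using m insert.hyps by auto
    then have "lt x m" using tot False by blast
    then show ?thesis using m by auto
  qed
qed

lemma unique_term:
  fixes op :: "'q \<Rightarrow> 'q \<Rightarrow> 'q"
  assumes q: "quandle op" and sl: "semi_latin op"
    and ord: "right_orderable op \<or> left_orderable op"
    and fA: "finite A" and nA: "A \<noteq> {}" and fB: "finite B" and nB: "B \<noteq> {}"
  shows "\<exists>a\<in>A. \<exists>b\<in>B. \<forall>x\<in>A. \<forall>y\<in>B. op x y = op a b \<longrightarrow> x = a \<and> y = b"
proof -
  have rc: "\<And>z z' y. op z y = op z' y \<Longrightarrow> z = z'"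
  proof -
    fix z z' y assume h: "op z y = op z' y"
    from q have "\<forall>x y. \<exists>!w. x = op w y" unfolding quandle_def by (rule conjunct1[OF conjunct2])
    then have "\<exists>!w. op z y = op w y" by (rule allE) (rule allE)
    then obtain w where "\<forall>w'. op z y = op w' y \<longrightarrow> w' = w" by (elim ex1E) (rule that)
    then have a1: "op z y = op z y \<longrightarrow> z = w" and a2: "op z y = op z' y \<longrightarrow> z' = w"
      by (rule spec)+
    then have "z = w" "z' = w" using h by blast+
    then show "z = z'" by simp
  qed
  have lc: "\<And>z y y'. op z y = op z y' \<Longrightarrow> y = y'"
    using sl unfolding semi_latin_def inj_def by blast
  from ord show ?thesis
  proof
    assume "right_orderable op"
    then obtain lt where slo: "strict_linear_order lt"
      and mono: "\<forall>x y z. lt x y \<longrightarrow> lt (op x z) (op y z)"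
      unfolding right_orderable_def by blast
    obtain a where a: "a \<in> A" "\<forall>s\<in>A. s \<noteq> a \<longrightarrow> lt s a" using slo_max[OF slo fA nA] by blast
    obtain m where m: "m \<in> op a ` B" "\<forall>s\<in>op a ` B. s \<noteq> m \<longrightarrow> lt s m"
      using slo_max[OF slo, of "op a ` B"] fB nB by blast
    then obtain b where b: "b \<in> B" "m = op a b" by blast
    have irr: "\<And>x. \<not> lt x x" and tr: "\<And>x y z. lt x y \<Longrightarrow> lt y z \<Longrightarrow> lt x z"
      using slo unfolding strict_linear_order_def by blast+
    show ?thesis
    proof (intro bexI[OF _ a(1)] bexI[OF _ b(1)] ballI impI)
      fix x y assume x: "x \<in> A" and y: "y \<in> B" and e: "op x y = op a b"
      have "x = a"
      proof (rule ccontr)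
        assume "x \<noteq> a"
        then have "lt (op x y) (op a y)" using a x mono by blast
        moreover have "op a y = m \<or> lt (op a y) m" using m y by blast
        ultimately have "lt (op a b) m \<or> lt (op a b) (op a y) \<and> lt (op a y) m" using e by auto
        then have "lt m m" using b(2) tr by auto
        then show False using irr by blast
      qed
      then show "x = a \<and> y = b" using e lc by blast
    qed
  next
    assume "left_orderable op"
    then obtain lt where slo: "strict_linear_order lt"
      and mono: "\<forall>x y z. lt x y \<longrightarrow> lt (op z x) (op z y)"
      unfolding left_orderable_def by blast
    obtain b where b: "b \<in> B" "\<forall>s\<in>B. s \<noteq> b \<longrightarrow> lt s b" using slo_max[OF slo fB nB] by blast
    obtain m where m: "m \<in> (\<lambda>x. op x b) ` A" "\<forall>s\<in>(\<lambda>x. op x b) ` A. s \<noteq> m \<longrightarrow> lt s m"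
      using slo_max[OF slo, of "(\<lambda>x. op x b) ` A"] fA nA by blast
    then obtain a where a: "a \<in> A" "m = op a b" by blast
    have irr: "\<And>x. \<not> lt x x" and tr: "\<And>x y z. lt x y \<Longrightarrow> lt y z \<Longrightarrow> lt x z"
      using slo unfolding strict_linear_order_def by blast+
    show ?thesis
    proof (intro bexI[OF _ a(1)] bexI[OF _ b(1)] ballI impI)
      fix x y assume x: "x \<in> A" and y: "y \<in> B" and e: "op x y = op a b"
      have "y = b"
      proof (rule ccontr)
        assume "y \<noteq> b"
        then have "lt (op x y) (op x b)" using b y mono by blast
        moreover have "op x b = m \<or> lt (op x b) m" using m x by blast
        ultimately have "lt (op a b) m \<or> lt (op a b) (op x b) \<and> lt (op x b) m" using e by auto
        then have "lt m m" using a(2) tr by auto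
        then show False using irr by blast
      qed
      then show "x = a \<and> y = b" using e rc by blast
    qed
  qed
qed

lemma prod_nonzero:
  fixes op :: "'q \<Rightarrow> 'q \<Rightarrow> 'q" and u v :: "'q \<Rightarrow>\<^sub>0 'r::idom"
  assumes q: "quandle op" and sl: "semi_latin op"
    and ord: "right_orderable op \<or> left_orderable op"
    and u: "u \<noteq> 0" and v: "v \<noteq> 0"
  shows "qring_mult op u v \<noteq> 0"
proof -
  let ?A = "Poly_Mapping.keys u" and ?B = "Poly_Mapping.keys v"
  have fA: "finite ?A" and fB: "finite ?B" by simp_all
  have nA: "?A \<noteq> {}" and nB: "?B \<noteq> {}" using u v by simp_all
  obtain a b where a: "a \<in> ?A" and b: "b \<in> ?B"
    and un: "\<forall>x\<in>?A. \<forall>y\<in>?B. op x y = op a b \<longrightarrow> x = a \<and> y = b"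
    using unique_term[OF q sl ord fA nA fB nB] by blast
  let ?g = "\<lambda>x y. Poly_Mapping.lookup (Poly_Mapping.single (op x y) (Poly_Mapping.lookup u x * Poly_Mapping.lookup v y)) (op a b)"
  have "Poly_Mapping.lookup (qring_mult op u v) (op a b) = (\<Sum>x\<in>?A. \<Sum>y\<in>?B. ?g x y)"
    unfolding qring_mult_def by (simp add: lookup_sum)
  also have "\<dots> = (\<Sum>y\<in>?B. ?g a y)"
  proof -
    have z: "\<And>x. x \<in> ?A - {a} \<Longrightarrow> (\<Sum>y\<in>?B. ?g x y) = 0"
    proof -
      fix x assume x: "x \<in> ?A - {a}"
      show "(\<Sum>y\<in>?B. ?g x y) = 0"
      proof (rule sum.neutral, rule ballI)
        fix y assume y: "y \<in> ?B"
        have "op x y \<noteq> op a b" using un x y by blast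
        then show "?g x y = 0" by (simp add: lookup_single)
      qed
    qed
    have "(\<Sum>x\<in>?A. \<Sum>y\<in>?B. ?g x y) = (\<Sum>y\<in>?B. ?g a y) + (\<Sum>x\<in>?A - {a}. \<Sum>y\<in>?B. ?g x y)"
      by (rule sum.remove[OF fA a])
    also have "(\<Sum>x\<in>?A - {a}. \<Sum>y\<in>?B. ?g x y) = 0" using z by (rule sum.neutral[OF ballI])
    finally show ?thesis by simp
  qed
  also have "\<dots> = ?g a b"
  proof -
    have z: "\<And>y. y \<in> ?B - {b} \<Longrightarrow> ?g a y = 0"
    proof -
      fix y assume y: "y \<in> ?B - {b}"
      have "op a y \<noteq> op a b" using un a y by blast
      then show "?g a y = 0" by (simp add: lookup_single)
    qed
    have "(\<Sum>y\<in>?B. ?g a y) = ?g a b + (\<Sum>y\<in>?B - {b}. ?g a y)"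
      by (rule sum.remove[OF fB b])
    also have "(\<Sum>y\<in>?B - {b}. ?g a y) = 0" using z by (rule sum.neutral[OF ballI])
    finally show ?thesis by simp
  qed
  also have "\<dots> = Poly_Mapping.lookup u a * Poly_Mapping.lookup v b" by simp
  also have "\<dots> \<noteq> 0" using a b by (simp add: in_keys_iff)
  finally show ?thesis by auto
qed

theorem theorem3p11:
  fixes op :: "'q \<Rightarrow> 'q \<Rightarrow> 'q"
  assumes "quandle op"
    and "semi_latin op"
    and "right_orderable op \<or> left_orderable op"
  shows "\<not> (\<exists>u :: 'q \<Rightarrow>\<^sub>0 'r::idom. qring_zero_divisor op u)"
  using prod_nonzero[OF assms] unfolding qring_zero_divisor_def by blast

end
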